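(* Let $\bar f$ be interval Riemann integrable on $[a,b]$ and define $\bar F:[a,b]\to\mathbb{R}_\mathcal{I}$ by $\bar F(t)=(IR)\int_a^t\bar f(s)\,ds$. Then $\bar F$ is continuous on $[a,b]$, and $\bar F'(x)=\bar f(x)$ at every point $x$ at which $\bar f$ is continuous.
   Context: An interval number is a closed interval $\bar a=[a_l,a_r]$ with $a_l<a_r$ real; $\mathbb{R}_\mathcal{I}$ is the set of interval numbers. Write $a_c=(a_l+a_r)/2$, $a_w=(a_r-a_l)/2>0$, $\bar a=\langle a_c;a_w\rangle=[a_c-a_w,a_c+a_w]$. Operations: $\bar a+\bar b=\langle a_c+b_c;a_wb_w\rangle$, $\bar a-\bar b=\langle a_c-b_c;a_w/b_w\rangle$, $k\bar a=\langle ka_c;a_w^k\rangle$ for real $k$; for real $h\ne0$, $\bar c/h=\langle c_c/h;c_w^{1/h}\rangle$. Distance $d(\bar a,\bar b)=\sqrt{(a_c-b_c)^2+(\ln a_w-\ln b_w)^2}$; continuity and limits w.r.t. $d$. Derivative: $\bar F'(x)=\lim_{h\to0}\frac{\bar F(x+h)-\bar F(x)}{h}$. Interval Riemann integral: $\bar A=(IR)\int_a^b\bar f$ if for every $\varepsilon>0$ there is $\delta>0$ such that for every partition $a=t_0<\dots<t_n=b$ with mesh $<\delta$ and tags $\xi_i\in[t_{i-1},t_i]$, $d(\sum_i(t_i-t_{i-1})\bar f(\xi_i),\bar A)<\varepsilon$. *)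

theory Defs
  imports Complex_Main
begin

typedef interval = "{p :: real \<times> real. fst p < snd p}"
  by (rule exI[of _ "(0, 1)"]) simp

definition ic :: "interval \<Rightarrow> real" where
  "ic a = (fst (Rep_interval a) + snd (Rep_interval a)) / 2"

definition iw :: "interval \<Rightarrow> real" where
  "iw a = (snd (Rep_interval a) - fst (Rep_interval a)) / 2"

text \<open>The interval with centre c and half-width w (meaningful for w > 0).\<close>
definition mk_interval :: "real \<Rightarrow> real \<Rightarrow> interval" where
  "mk_interval c w = Abs_interval (c - w, c + w)"

definition iadd :: "interval \<Rightarrow> interval \<Rightarrow> interval" where
  "iadd a b = mk_interval (ic a + ic b) (iw a * iw b)"

definition isub :: "interval \<Rightarrow> interval \<Rightarrow> interval" where
  "isub a b = mk_interval (ic a - ic b) (iw a / iw b)"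

definition iscale :: "real \<Rightarrow> interval \<Rightarrow> interval" where
  "iscale k a = mk_interval (k * ic a) (iw a powr k)"

definition idiv :: "interval \<Rightarrow> real \<Rightarrow> interval" where
  "idiv c h = mk_interval (ic c / h) (iw c powr (1 / h))"

definition idist :: "interval \<Rightarrow> interval \<Rightarrow> real" where
  "idist a b = sqrt ((ic a - ic b)^2 + (ln (iw a) - ln (iw b))^2)"

text \<open>Neutral element of iadd: <0;1> = [-1,1]. Iterated sum g 1 + ... + g n.\<close>
definition izero :: interval where "izero = mk_interval 0 1"

primrec isum :: "(nat \<Rightarrow> interval) \<Rightarrow> nat \<Rightarrow> interval" where
  "isum g 0 = izero"
| "isum g (Suc n) = iadd (isum g n) (g (Suc n))"

definition IR_has_integral :: "(real \<Rightarrow> interval) \<Rightarrow> real \<Rightarrow> real \<Rightarrow> interval \<Rightarrow> bool" where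
  "IR_has_integral f a b A \<longleftrightarrow>
     (\<forall>\<epsilon>>0. \<exists>\<delta>>0. \<forall>(n::nat) (t::nat \<Rightarrow> real) (\<xi>::nat \<Rightarrow> real).
        t 0 = a \<and> t n = b \<and> (\<forall>i\<in>{1..n}. t (i - 1) < t i \<and> t i - t (i - 1) < \<delta>)
        \<and> (\<forall>i\<in>{1..n}. \<xi> i \<in> {t (i - 1) .. t i})
        \<longrightarrow> idist (isum (\<lambda>i. iscale (t i - t (i - 1)) (f (\<xi> i))) n) A < \<epsilon>)"

definition IR_integrable :: "(real \<Rightarrow> interval) \<Rightarrow> real \<Rightarrow> real \<Rightarrow> bool" where
  "IR_integrable f a b \<longleftrightarrow> (\<exists>A. IR_has_integral f a b A)"

definition IR_integral :: "(real \<Rightarrow> interval) \<Rightarrow> real \<Rightarrow> real \<Rightarrow> interval" where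
  "IR_integral f a b = (THE A. IR_has_integral f a b A)"

definition icont_at_within :: "(real \<Rightarrow> interval) \<Rightarrow> real \<Rightarrow> real set \<Rightarrow> bool" where
  "icont_at_within F x S \<longleftrightarrow>
     (\<forall>\<epsilon>>0. \<exists>\<delta>>0. \<forall>y\<in>S. \<bar>y - x\<bar> < \<delta> \<longrightarrow> idist (F y) (F x) < \<epsilon>)"

definition icont_on :: "real set \<Rightarrow> (real \<Rightarrow> interval) \<Rightarrow> bool" where
  "icont_on S F \<longleftrightarrow> (\<forall>x\<in>S. icont_at_within F x S)"

definition ihas_deriv_within :: "(real \<Rightarrow> interval) \<Rightarrow> interval \<Rightarrow> real \<Rightarrow> real set \<Rightarrow> bool" where
  "ihas_deriv_within F D x S \<longleftrightarrow>
     (\<forall>\<epsilon>>0. \<exists>\<delta>>0. \<forall>h. h \<noteq> 0 \<and> \<bar>h\<bar> < \<delta> \<and> x + h \<in> S \<longrightarrow>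
        idist (idiv (isub (F (x + h)) (F x)) h) D < \<epsilon>)"

end

theory Submission
  imports Defs
begin


definition vc :: "interval \<Rightarrow> complex" where
  "vc a = Complex (ic a) (ln (iw a))"

lemma iw_pos: "iw a > 0"
  using Rep_interval[of a] by (auto simp: iw_def)

lemma mk_ic: "w > 0 \<Longrightarrow> ic (mk_interval c w) = c"
  by (simp add: ic_def mk_interval_def Abs_interval_inverse)

lemma mk_iw: "w > 0 \<Longrightarrow> iw (mk_interval c w) = w"
  by (simp add: iw_def mk_interval_def Abs_interval_inverse)

lemma vc_mk: "w > 0 \<Longrightarrow> vc (mk_interval c w) = Complex c (ln w)"
  by (simp add: vc_def mk_ic mk_iw)

lemma Re_vc[simp]: "Re (vc a) = ic a" by (simp add: vc_def)
lemma Im_vc[simp]: "Im (vc a) = ln (iw a)" by (simp add: vc_def)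

lemma vc_iadd: "vc (iadd a b) = vc a + vc b"
  using iw_pos[of a] iw_pos[of b]
  by (simp add: iadd_def mk_ic mk_iw complex_eq_iff ln_mult)

lemma vc_isub: "vc (isub a b) = vc a - vc b"
  using iw_pos[of a] iw_pos[of b]
  by (simp add: isub_def mk_ic mk_iw complex_eq_iff ln_div)

lemma vc_iscale: "vc (iscale k a) = of_real k * vc a"
  using iw_pos[of a]
  by (simp add: iscale_def mk_ic mk_iw complex_eq_iff)

lemma vc_idiv: "vc (idiv c h) = vc c / of_real h"
  using iw_pos[of c]
  by (simp add: idiv_def mk_ic mk_iw complex_eq_iff Re_divide Im_divide power2_eq_square)

lemma vc_izero: "vc izero = 0"
  by (simp add: izero_def vc_mk complex_eq_iff)

lemma idist_vc: "idist a b = cmod (vc a - vc b)"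
  by (simp add: idist_def vc_def cmod_def)

lemma vc_inj: "vc a = vc b \<Longrightarrow> a = b"
proof -
  assume h: "vc a = vc b"
  hence c: "ic a = ic b" and w: "ln (iw a) = ln (iw b)" by (auto simp: vc_def)
  from w iw_pos[of a] iw_pos[of b] have w': "iw a = iw b" by simp
  have "Rep_interval a = Rep_interval b"
    using c w' unfolding ic_def iw_def
    by (simp add: prod_eq_iff)
  thus ?thesis by (simp add: Rep_interval_inject)
qed

lemma vc_surj: "vc (mk_interval (Re L) (exp (Im L))) = L"
  by (simp add: vc_mk complex_eq_iff)



primrec rsum :: "(real \<Rightarrow> complex) \<Rightarrow> (nat \<Rightarrow> real) \<Rightarrow> (nat \<Rightarrow> real) \<Rightarrow> nat \<Rightarrow> complex" where
  "rsum g t xi 0 = 0"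
| "rsum g t xi (Suc n) = rsum g t xi n + of_real (t (Suc n) - t n) * g (xi (Suc n))"

definition tpart :: "real \<Rightarrow> real \<Rightarrow> real \<Rightarrow> nat \<Rightarrow> (nat \<Rightarrow> real) \<Rightarrow> (nat \<Rightarrow> real) \<Rightarrow> bool" where
  "tpart c d \<delta> n t xi \<longleftrightarrow> t 0 = c \<and> t n = d \<and> (\<forall>i\<in>{1..n}. t (i - 1) < t i \<and> t i - t (i - 1) < \<delta>)
        \<and> (\<forall>i\<in>{1..n}. xi i \<in> {t (i - 1) .. t i})"

definition hasint :: "(real \<Rightarrow> complex) \<Rightarrow> real \<Rightarrow> real \<Rightarrow> complex \<Rightarrow> bool" where
  "hasint g c d A \<longleftrightarrow> (\<forall>\<epsilon>>0. \<exists>\<delta>>0. \<forall>n t xi. tpart c d \<delta> n t xi \<longrightarrow> cmod (rsum g t xi n - A) < \<epsilon>)"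

lemma vc_isum: "vc (isum (\<lambda>i. iscale (t i - t (i - 1)) (f (xi i))) n) = rsum (\<lambda>s. vc (f s)) t xi n"
  by (induction n) (simp_all add: vc_izero vc_iadd vc_iscale)

lemma IR_hasint: "IR_has_integral f c d A \<longleftrightarrow> hasint (\<lambda>s. vc (f s)) c d (vc A)"
  unfolding IR_has_integral_def hasint_def tpart_def idist_vc vc_isum by blast

lemma rsum_cong: "(\<forall>i\<le>n. t i = t' i) \<Longrightarrow> (\<forall>i\<in>{1..n}. xi i = xi' i) \<Longrightarrow> rsum g t xi n = rsum g t' xi' n"
  by (induction n) auto

lemma mono_le: "(\<forall>i\<in>{1..n::nat}. (t::nat\<Rightarrow>real) (i - 1) \<le> t i) \<Longrightarrow> i \<le> j \<Longrightarrow> j \<le> n \<Longrightarrow> t i \<le> t j"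
proof (induction j)
  case 0 then show ?case by simp
next
  case (Suc j)
  show ?case
  proof (cases "i = Suc j")
    case False
    then have "t i \<le> t j" using Suc by auto
    moreover have "t j \<le> t (Suc j)" using Suc.prems(1) Suc.prems(3) by force
    ultimately show ?thesis by simp
  qed simp
qed

lemma strict_pos: "(\<forall>i\<in>{1..n::nat}. (t::nat\<Rightarrow>real) (i - 1) < t i) \<Longrightarrow> 0 < n \<Longrightarrow> t 0 < t n"
proof (induction n)
  case 0 then show ?case by simp
next
  case (Suc n)
  have "t n < t (Suc n)" using Suc.prems(1) by force
  moreover have "n > 0 \<Longrightarrow> t 0 < t n" using Suc by auto
  ultimately show ?case by (cases "n = 0") auto
qed

lemma tpart_le: "tpart c d \<delta> n t xi \<Longrightarrow> i \<le> j \<Longrightarrow> j \<le> n \<Longrightarrow> t i \<le> t j"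
  unfolding tpart_def by (rule mono_le[of n t]) (auto simp: less_imp_le)

lemma tpart_tag: "tpart c d \<delta> n t xi \<Longrightarrow> i \<in> {1..n} \<Longrightarrow> c \<le> xi i \<and> xi i \<le> d"
proof -
  assume h: "tpart c d \<delta> n t xi" "i \<in> {1..n}"
  have "t 0 \<le> t (i - 1)" using tpart_le[OF h(1), of 0 "i - 1"] h(2) by auto
  have "t i \<le> t n" using tpart_le[OF h(1), of i n] h(2) by simp
  moreover note \<open>t 0 \<le> t (i - 1)\<close>
  moreover have "t (i - 1) \<le> xi i" "xi i \<le> t i" using h unfolding tpart_def by auto
  moreover have "t 0 = c" "t n = d" using h unfolding tpart_def by auto
  ultimately show ?thesis by (metis order_trans)
qed

lemma tpart_same: "tpart c c \<delta> n t xi \<Longrightarrow> n = 0"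
proof (rule ccontr)
  assume h: "tpart c c \<delta> n t xi" "n \<noteq> 0"
  have "\<forall>i\<in>{1..n}. t (i - 1) < t i" using h(1) unfolding tpart_def by blast
  then have "t 0 < t n" using strict_pos[of n t] h(2) by blast
  moreover have "t 0 = c" "t n = c" using h(1) unfolding tpart_def by auto
  ultimately show False by simp
qed

lemma upart2: "0 < h \<Longrightarrow> h < \<delta> \<Longrightarrow> c + real N * h = d \<Longrightarrow>
   tpart c d \<delta> N (\<lambda>i. c + real i * h) (\<lambda>i. c + real i * h)"
proof -
  assume h: "0 < h" "h < \<delta>" "c + real N * h = d"
  have e: "(c + real i * h) - (c + real (i - 1) * h) = h" if "i \<ge> 1" for i
  proof -
    have "real (i - 1) = real i - 1" using that by (simp add: of_nat_diff)
    then show ?thesis by (simp add: algebra_simps)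
  qed
  show ?thesis unfolding tpart_def
  proof (intro conjI ballI)
    fix i :: nat assume i: "i \<in> {1..N}"
    then have ei: "(c + real i * h) - (c + real (i - 1) * h) = h" using e by simp
    show "c + real (i - 1) * h < c + real i * h" using ei h(1) by linarith
    show "(c + real i * h) - (c + real (i - 1) * h) < \<delta>" using ei h(2) by linarith
    show "c + real i * h \<in> {c + real (i - 1) * h .. c + real i * h}" using ei h(1) by simp
  qed (use h in simp_all)
qed

lemma tpart_exists: "c \<le> d \<Longrightarrow> 0 < \<delta> \<Longrightarrow> \<exists>n t. tpart c d \<delta> n t t"
proof (cases "c = d")
  case True
  then show ?thesis by (intro exI[of _ 0] exI[of _ "\<lambda>_. c"]) (simp add: tpart_def)
next
  case False
  assume h: "c \<le> d" "0 < \<delta>"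
  define N where "N = nat \<lceil>(d - c) / \<delta>\<rceil> + 1"
  have "(d - c) / \<delta> < real N" unfolding N_def by linarith
  hence "d - c < real N * \<delta>" using h by (simp add: pos_divide_less_eq)
  moreover have "0 < N" by (simp add: N_def)
  ultimately have "(d - c) / real N < \<delta>" by (simp add: pos_divide_less_eq mult.commute)
  moreover have "0 < N" by (simp add: N_def)
  moreover have "c < d" using False h by simp
  ultimately have "tpart c d \<delta> N (\<lambda>i. c + real i * ((d - c) / real N)) (\<lambda>i. c + real i * ((d - c) / real N))"
    by (intro upart2) auto
  then show ?thesis by blast
qed

lemma rsum_concat:
  assumes "s 0 = t n"
  shows "rsum g (\<lambda>i. if i \<le> n then t i else s (i - n)) (\<lambda>i. if i \<le> n then xi i else z (i - n)) (n + m)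
     = rsum g t xi n + rsum g s z m" (is "rsum g ?T ?Z (n + m) = _")
proof (induction m)
  case 0
  have "rsum g (\<lambda>i. if i \<le> n then t i else s (i - n)) (\<lambda>i. if i \<le> n then xi i else z (i - n)) n
     = rsum g t xi n" by (rule rsum_cong) auto
  then show ?case by simp
next
  case (Suc m)
  have e1: "(if n + m \<le> n then t (n + m) else s (n + m - n)) = s m"
    using assms by (cases m) auto
  have e2: "(if Suc (n + m) \<le> n then t (Suc (n + m)) else s (Suc (n + m) - n)) = s (Suc m)"
    by simp
  have e3: "(if Suc (n + m) \<le> n then xi (Suc (n + m)) else z (Suc (n + m) - n)) = z (Suc m)"
    by simp
  have "rsum g ?T ?Z (n + Suc m) = rsum g ?T ?Z (Suc (n + m))" by simp
  also have "\<dots> = rsum g ?T ?Z (n + m) + of_real (s (Suc m) - s m) * g (z (Suc m))"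
    by (simp only: rsum.simps e1 e2 e3)
  also have "\<dots> = rsum g t xi n + rsum g s z m + of_real (s (Suc m) - s m) * g (z (Suc m))"
    by (simp only: Suc.IH)
  also have "\<dots> = rsum g t xi n + rsum g s z (Suc m)" by (simp add: algebra_simps)
  finally show ?case .
qed

lemma tpart_concat:
  assumes "tpart c d \<delta> n t xi" "tpart d e \<delta> m s z"
  shows "tpart c e \<delta> (n + m) (\<lambda>i. if i \<le> n then t i else s (i - n)) (\<lambda>i. if i \<le> n then xi i else z (i - n))"
  unfolding tpart_def
proof (intro conjI ballI)
  show "(if 0 \<le> n then t 0 else s (0 - n)) = c" using assms by (simp add: tpart_def)
  show "(if n + m \<le> n then t (n + m) else s (n + m - n)) = e" using assms by (auto simp: tpart_def)
next
  fix i assume i: "i \<in> {1..n + m}"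
  consider "i \<le> n" | "i = n + 1" | "i > n + 1" by linarith
  then have H: "((if i - 1 \<le> n then t (i - 1) else s (i - 1 - n)) < (if i \<le> n then t i else s (i - n))
    \<and> (if i \<le> n then t i else s (i - n)) - (if i - 1 \<le> n then t (i - 1) else s (i - 1 - n)) < \<delta>)
    \<and> (if i \<le> n then xi i else z (i - n)) \<in> {(if i - 1 \<le> n then t (i - 1) else s (i - 1 - n)) .. (if i \<le> n then t i else s (i - n))}"
  proof cases
    case 1
    have A: "\<forall>i\<in>{1..n}. t (i - 1) < t i \<and> t i - t (i - 1) < \<delta>" "\<forall>i\<in>{1..n}. xi i \<in> {t (i - 1)..t i}"
      using assms(1) unfolding tpart_def by auto
    have k: "i \<in> {1..n}" using 1 i by auto
    have "t (i - 1) < t i \<and> t i - t (i - 1) < \<delta>" "xi i \<in> {t (i - 1)..t i}"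
      using bspec[OF A(1) k] bspec[OF A(2) k] by auto
    moreover have "i \<le> n" "i - 1 \<le> n" using 1 by auto
    ultimately show ?thesis by simp
  next
    case 2
    have "1 \<in> {1..m}" using i 2 by auto
    have A: "\<forall>i\<in>{1..m}. s (i - 1) < s i \<and> s i - s (i - 1) < \<delta>" "\<forall>i\<in>{1..m}. z i \<in> {s (i - 1)..s i}"
      using assms(2) unfolding tpart_def by auto
    have "s 0 < s 1 \<and> s 1 - s 0 < \<delta>" "z 1 \<in> {s 0..s 1}" 
      using bspec[OF A(1) \<open>1 \<in> {1..m}\<close>] bspec[OF A(2) \<open>1 \<in> {1..m}\<close>] by auto
    moreover have "s 0 = d" "t n = d" using assms unfolding tpart_def by auto
    moreover have "i - 1 = n" "i - n = 1" "\<not> i \<le> n" using 2 by auto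
    ultimately show ?thesis by simp
  next
    case 3
    define k where "k = i - n"
    have k: "k \<in> {1..m}" using i 3 by (auto simp: k_def)
    have A: "\<forall>i\<in>{1..m}. s (i - 1) < s i \<and> s i - s (i - 1) < \<delta>" "\<forall>i\<in>{1..m}. z i \<in> {s (i - 1)..s i}"
      using assms(2) unfolding tpart_def by auto
    have "s (k - 1) < s k \<and> s k - s (k - 1) < \<delta>" "z k \<in> {s (k - 1)..s k}"
      using bspec[OF A(1) k] bspec[OF A(2) k] by auto
    moreover have "i - 1 - n = k - 1" "i - n = k" "\<not> i \<le> n" "\<not> i - 1 \<le> n" using 3 by (auto simp: k_def)
    ultimately show ?thesis by simp
  qed
  show "(if i - 1 \<le> n then t (i - 1) else s (i - 1 - n)) < (if i \<le> n then t i else s (i - n))"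
    by (rule conjunct1[OF conjunct1[OF H]])
  show "(if i \<le> n then t i else s (i - n)) - (if i - 1 \<le> n then t (i - 1) else s (i - 1 - n)) < \<delta>"
    by (rule conjunct2[OF conjunct1[OF H]])
  show "(if i \<le> n then xi i else z (i - n)) \<in> {(if i - 1 \<le> n then t (i - 1) else s (i - 1 - n)) .. (if i \<le> n then t i else s (i - n))}"
    by (rule conjunct2[OF H])
qed



lemma rsum_bound:
  "(\<forall>i\<in>{1..n}. t (i - 1) \<le> t i) \<Longrightarrow> (\<forall>i\<in>{1..n}. cmod (g (xi i) - c) \<le> \<eta>) \<Longrightarrow>
   cmod (rsum g t xi n - of_real (t n - t 0) * c) \<le> (t n - t 0) * \<eta>"
proof (induction n)
  case 0 then show ?case by simp
next
  case (Suc n)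
  have ih: "cmod (rsum g t xi n - of_real (t n - t 0) * c) \<le> (t n - t 0) * \<eta>"
    using Suc by auto
  have d: "t n \<le> t (Suc n)" using Suc.prems(1) by force
  have b: "cmod (g (xi (Suc n)) - c) \<le> \<eta>" using Suc.prems(2) by force
  have "rsum g t xi (Suc n) - of_real (t (Suc n) - t 0) * c
      = (rsum g t xi n - of_real (t n - t 0) * c) + of_real (t (Suc n) - t n) * (g (xi (Suc n)) - c)"
    by (simp add: algebra_simps)
  then have "cmod (rsum g t xi (Suc n) - of_real (t (Suc n) - t 0) * c)
      \<le> cmod (rsum g t xi n - of_real (t n - t 0) * c) + cmod (of_real (t (Suc n) - t n) * (g (xi (Suc n)) - c))"
    by (metis norm_triangle_ineq)
  also have "cmod (of_real (t (Suc n) - t n) * (g (xi (Suc n)) - c)) = (t (Suc n) - t n) * cmod (g (xi (Suc n)) - c)"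
    using d by (simp only: norm_mult norm_of_real abs_of_nonneg diff_ge_0_iff_ge)
  also have "\<dots> \<le> (t (Suc n) - t n) * \<eta>" using d b by (simp add: mult_left_mono)
  finally show ?case using ih by (simp add: algebra_simps)
qed

lemma rsum_upd:
  "rsum g t (xi(i := s)) n = rsum g t xi n + (if i \<in> {1..n} then of_real (t i - t (i - 1)) * (g s - g (xi i)) else 0)"
proof (induction n)
  case 0 then show ?case by simp
next
  case (Suc n)
  show ?case
  proof (cases "i = Suc n")
    case True
    then have "i \<notin> {1..n}" by auto
    then show ?thesis using Suc True by (simp add: algebra_simps)
  next
    case False
    then have "(i \<in> {1..Suc n}) = (i \<in> {1..n})" by auto
    then show ?thesis using Suc False by simp
  qed
qed

lemma find_piece:
  "(\<forall>i\<in>{1..n::nat}. (t::nat\<Rightarrow>real) (i - 1) \<le> t i) \<Longrightarrow> t 0 \<le> s \<Longrightarrow> s \<le> t n \<Longrightarrow> 0 < n \<Longrightarrow>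
   \<exists>i\<in>{1..n}. t (i - 1) \<le> s \<and> s \<le> t i"
proof (induction n)
  case 0 then show ?case by simp
next
  case (Suc n)
  show ?case
  proof (cases "s \<le> t n \<and> 0 < n")
    case True
    then obtain i where "i \<in> {1..n}" "t (i - 1) \<le> s \<and> s \<le> t i" using Suc by auto
    then show ?thesis by (intro bexI[of _ i]) auto
  next
    case False
    then have "t n \<le> s" using Suc.prems by auto
    then show ?thesis using Suc.prems by (intro bexI[of _ "Suc n"]) auto
  qed
qed

lemma hasint_unique:
  assumes "hasint g c d A" "hasint g c d B" "c \<le> d"
  shows "A = B"
proof (rule ccontr)
  assume ne: "A \<noteq> B"
  define e where "e = cmod (A - B) / 2"
  have e: "e > 0" using ne by (simp add: e_def)
  obtain d1 where d1: "d1 > 0" "\<forall>n t xi. tpart c d d1 n t xi \<longrightarrow> cmod (rsum g t xi n - A) < e"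
    using assms(1) e unfolding hasint_def by blast
  obtain d2 where d2: "d2 > 0" "\<forall>n t xi. tpart c d d2 n t xi \<longrightarrow> cmod (rsum g t xi n - B) < e"
    using assms(2) e unfolding hasint_def by blast
  obtain n t where p: "tpart c d (min d1 d2) n t t" using tpart_exists[of c d "min d1 d2"] assms(3) d1 d2 by auto
  have "tpart c d d1 n t t" "tpart c d d2 n t t" using p unfolding tpart_def by auto
  then have "cmod (rsum g t t n - A) < e" "cmod (rsum g t t n - B) < e" using d1 d2 by auto
  moreover have "cmod (A - B) \<le> cmod (rsum g t t n - A) + cmod (rsum g t t n - B)"
    by (metis norm_triangle_ineq4 norm_minus_commute diff_diff_eq2 add.commute diff_add_cancel norm_triangle_sub)
  ultimately show False by (simp add: e_def)
qed



lemma tri3: "cmod (x - y + z) \<le> cmod x + cmod y + cmod (z::complex)"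
proof -
  have "cmod (x - y + z) \<le> cmod (x - y) + cmod z" by (rule norm_triangle_ineq)
  moreover have "cmod (x - y) \<le> cmod x + cmod y" by (rule norm_triangle_ineq4)
  ultimately show ?thesis by simp
qed

lemma mesh_small: "0 < \<delta> \<Longrightarrow> \<exists>N. \<forall>k\<ge>N. (t - a) / real (Suc k) < (\<delta>::real)"
proof -
  assume d: "0 < \<delta>"
  define N where "N = nat \<lceil>(t - a) / \<delta>\<rceil>"
  have "\<forall>k\<ge>N. (t - a) / real (Suc k) < \<delta>"
  proof (intro allI impI)
    fix k assume "N \<le> k"
    then have "(t - a) / \<delta> < real (Suc k)" unfolding N_def by linarith
    then have "t - a < real (Suc k) * \<delta>" using d by (simp add: pos_divide_less_eq)
    then show "(t - a) / real (Suc k) < \<delta>" by (simp add: pos_divide_less_eq mult.commute)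
  qed
  then show ?thesis by blast
qed

lemma hasint_triv: "hasint g a a 0"
  unfolding hasint_def
proof (intro allI impI)
  fix e :: real assume "0 < e"
  have "\<forall>n t xi. tpart a a 1 n t xi \<longrightarrow> cmod (rsum g t xi n - 0) < e"
    using tpart_same \<open>0 < e\<close> by fastforce
  then show "\<exists>\<delta>>0. \<forall>n t xi. tpart a a \<delta> n t xi \<longrightarrow> cmod (rsum g t xi n - 0) < e"
    by (intro exI[of _ 1]) auto
qed

lemma sub_exists:
  assumes A: "hasint g a b A" and at: "a \<le> t" and tb: "t \<le> b"
  shows "\<exists>L. hasint g a t L"
proof -
  consider "t = b" | "t = a" | "a < t \<and> t < b" using at tb by linarith
  then show ?thesis
  proof cases
    case 1 then show ?thesis using A by blast
  next
    case 2 then show ?thesis using hasint_triv by blast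
  next
    case 3
    then have at': "a < t" and tb': "t < b" by auto
    have K: "\<exists>\<delta>>0. \<exists>m s. \<forall>n t' xi. tpart a t \<delta> n t' xi \<longrightarrow> cmod (rsum g t' xi n + rsum g s s m - A) < e"
      if e: "e > 0" for e
    proof -
      obtain \<delta> where d: "\<delta> > 0" "\<forall>n t xi. tpart a b \<delta> n t xi \<longrightarrow> cmod (rsum g t xi n - A) < e"
        using A e unfolding hasint_def by blast
      obtain m s where q: "tpart t b \<delta> m s s" using tpart_exists[of t b \<delta>] tb d by auto
      have "\<forall>n t' xi. tpart a t \<delta> n t' xi \<longrightarrow> cmod (rsum g t' xi n + rsum g s s m - A) < e"
      proof (intro allI impI)
        fix n t' xi assume p: "tpart a t \<delta> n t' xi"
        have s0: "s 0 = t' n" using p q unfolding tpart_def by simp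
        have "tpart a b \<delta> (n + m) (\<lambda>i. if i \<le> n then t' i else s (i - n)) (\<lambda>i. if i \<le> n then xi i else s (i - n))"
          by (rule tpart_concat[OF p q])
        then have "cmod (rsum g (\<lambda>i. if i \<le> n then t' i else s (i - n)) (\<lambda>i. if i \<le> n then xi i else s (i - n)) (n + m) - A) < e"
          using d by blast
        then show "cmod (rsum g t' xi n + rsum g s s m - A) < e"
          using rsum_concat[of s t' n g xi s m, OF s0] by simp
      qed
      then show ?thesis using d by blast
    qed
    define u where "u k = (\<lambda>i. a + real i * ((t - a) / real (Suc k)))" for k
    have up: "tpart a t \<delta> (Suc k) (u k) (u k)" if "(t - a) / real (Suc k) < \<delta>" for k \<delta>
      unfolding u_def using that at' by (intro upart2) auto
    define S where "S k = rsum g (u k) (u k) (Suc k)" for k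
    have "Cauchy S"
      unfolding Cauchy_def dist_norm
    proof (intro allI impI)
      fix e :: real assume e: "e > 0"
      obtain \<delta> m s where d: "\<delta> > 0" "\<forall>n t' xi. tpart a t \<delta> n t' xi \<longrightarrow> cmod (rsum g t' xi n + rsum g s s m - A) < e / 2"
        using K[of "e / 2"] e by auto
      obtain N where N: "\<forall>k\<ge>N. (t - a) / real (Suc k) < \<delta>" using mesh_small d(1) by blast
      have "cmod (S k - S j) < e" if "k \<ge> N" "j \<ge> N" for k j
      proof -
        have "tpart a t \<delta> (Suc k) (u k) (u k)" "tpart a t \<delta> (Suc j) (u j) (u j)"
          using up N that by auto
        then have "cmod (S k + rsum g s s m - A) < e / 2" "cmod (S j + rsum g s s m - A) < e / 2"
          unfolding S_def using d(2) by blast+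
        moreover have "S k - S j = (S k + rsum g s s m - A) - (S j + rsum g s s m - A)" by simp
        ultimately show ?thesis using norm_triangle_ineq4[of "S k + rsum g s s m - A" "S j + rsum g s s m - A"]
          by simp
      qed
      then show "\<exists>M. \<forall>m\<ge>M. \<forall>n\<ge>M. cmod (S m - S n) < e" by blast
    qed
    then obtain L where L: "S \<longlonglongrightarrow> L" using Cauchy_convergent_iff convergent_def by blast
    have "hasint g a t L"
      unfolding hasint_def
    proof (intro allI impI)
      fix e :: real assume e: "e > 0"
      obtain \<delta> m s where d: "\<delta> > 0" "\<forall>n t' xi. tpart a t \<delta> n t' xi \<longrightarrow> cmod (rsum g t' xi n + rsum g s s m - A) < e / 3"
        using K[of "e / 3"] e by auto
      obtain N1 where N1: "\<forall>k\<ge>N1. (t - a) / real (Suc k) < \<delta>" using mesh_small d(1) by blast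
      obtain N2 where N2: "\<forall>k\<ge>N2. cmod (S k - L) < e / 3" using L e unfolding LIMSEQ_iff
        by (metis divide_pos_pos zero_less_numeral)
      define k where "k = max N1 N2"
      have "tpart a t \<delta> (Suc k) (u k) (u k)" using up N1 unfolding k_def by auto
      then have k1: "cmod (S k + rsum g s s m - A) < e / 3" unfolding S_def using d(2) by blast
      have k2: "cmod (S k - L) < e / 3" using N2 unfolding k_def by auto
      have "\<forall>n t' xi. tpart a t \<delta> n t' xi \<longrightarrow> cmod (rsum g t' xi n - L) < e"
      proof (intro allI impI)
        fix n t' xi assume p: "tpart a t \<delta> n t' xi"
        have p1: "cmod (rsum g t' xi n + rsum g s s m - A) < e / 3" using d(2) p by blast
        have "rsum g t' xi n - L = (rsum g t' xi n + rsum g s s m - A) - (S k + rsum g s s m - A) + (S k - L)"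
          by simp
        then have "cmod (rsum g t' xi n - L) \<le> cmod (rsum g t' xi n + rsum g s s m - A) + cmod (S k + rsum g s s m - A) + cmod (S k - L)"
          using tri3 by metis
        then show "cmod (rsum g t' xi n - L) < e" using p1 k1 k2 by linarith
      qed
      then show "\<exists>\<delta>>0. \<forall>n t' xi. tpart a t \<delta> n t' xi \<longrightarrow> cmod (rsum g t' xi n - L) < e" using d(1) by blast
    qed
    then show ?thesis by blast
  qed
qed



lemma tpart_delta: "tpart c d \<delta> n t xi \<Longrightarrow> \<delta> \<le> \<delta>' \<Longrightarrow> tpart c d \<delta>' n t xi"
  unfolding tpart_def by force

lemma bounded:
  assumes A: "hasint g a b A" and ab: "a < b"
  shows "\<exists>M. \<forall>s\<in>{a..b}. cmod (g s) \<le> M"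
proof -
  obtain \<delta> where d: "\<delta> > 0" "\<forall>n t xi. tpart a b \<delta> n t xi \<longrightarrow> cmod (rsum g t xi n - A) < 1"
    using A unfolding hasint_def by (meson zero_less_one)
  obtain n t where p: "tpart a b \<delta> n t t" using tpart_exists[of a b \<delta>] ab d by auto
  have t0: "t 0 = a" and tn: "t n = b" using p unfolding tpart_def by auto
  have n0: "0 < n" using t0 tn ab by (cases n) auto
  have lt: "\<forall>i\<in>{1..n}. t (i - 1) < t i" using p unfolding tpart_def by auto
  then have mono: "\<forall>i\<in>{1..n}. t (i - 1) \<le> t i" by (auto simp: less_imp_le)
  define M where "M = (\<Sum>i\<in>{1..n}. cmod (g (t i)) + 2 / (t i - t (i - 1)))"
  have "cmod (g s) \<le> M" if s: "s \<in> {a..b}" for s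
  proof -
    obtain i where i: "i \<in> {1..n}" "t (i - 1) \<le> s" "s \<le> t i"
      using find_piece[of n t s] mono n0 s t0 tn by auto
    have pos: "t i - t (i - 1) > 0" using lt i(1) by auto
    have p': "tpart a b \<delta> n t (t(i := s))" using p i unfolding tpart_def by auto
    have "cmod (rsum g t (t(i := s)) n - A) < 1" "cmod (rsum g t t n - A) < 1" using d(2) p p' by blast+
    moreover have "rsum g t (t(i := s)) n = rsum g t t n + of_real (t i - t (i - 1)) * (g s - g (t i))"
      using rsum_upd[of g t t i s n] i(1) by simp
    ultimately have "cmod (of_real (t i - t (i - 1)) * (g s - g (t i))) < 2"
      using norm_triangle_ineq4[of "rsum g t (t(i := s)) n - A" "rsum g t t n - A"] by simp
    then have "(t i - t (i - 1)) * cmod (g s - g (t i)) < 2" using pos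
      by (simp only: norm_mult norm_of_real abs_of_pos)
    then have "cmod (g s - g (t i)) < 2 / (t i - t (i - 1))" using pos
      by (simp add: pos_less_divide_eq mult.commute)
    moreover have "cmod (g s) \<le> cmod (g (t i)) + cmod (g s - g (t i))" by (rule norm_triangle_sub)
    ultimately have "cmod (g s) \<le> cmod (g (t i)) + 2 / (t i - t (i - 1))" by simp
    also have "\<dots> \<le> M" unfolding M_def
    proof (rule member_le_sum[OF i(1)])
      fix j assume j: "j \<in> {1..n} - {i}"
      then have "t (j - 1) < t j" using lt by auto
      then show "0 \<le> cmod (g (t j)) + 2 / (t j - t (j - 1))" by simp
    qed simp
    finally show ?thesis .
  qed
  then show ?thesis by blast
qed

lemma incr:
  assumes Gx: "hasint g a x Gx" and Gy: "hasint g a y Gy" and ax: "a \<le> x" and xy: "x \<le> y"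
    and bd: "\<forall>s\<in>{x..y}. cmod (g s - c) \<le> \<eta>"
  shows "cmod (Gy - Gx - of_real (y - x) * c) \<le> (y - x) * \<eta>"
proof (rule field_le_epsilon)
  fix e :: real assume e: "0 < e"
  obtain d1 where d1: "d1 > 0" "\<forall>n t xi. tpart a x d1 n t xi \<longrightarrow> cmod (rsum g t xi n - Gx) < e / 2"
    using Gx e unfolding hasint_def by (meson half_gt_zero)
  obtain d2 where d2: "d2 > 0" "\<forall>n t xi. tpart a y d2 n t xi \<longrightarrow> cmod (rsum g t xi n - Gy) < e / 2"
    using Gy e unfolding hasint_def by (meson half_gt_zero)
  define \<delta> where "\<delta> = min d1 d2"
  have dp: "\<delta> > 0" using d1 d2 by (simp add: \<delta>_def)
  obtain n1 t1 where p1: "tpart a x \<delta> n1 t1 t1" using tpart_exists[of a x \<delta>] ax dp by auto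
  obtain n2 t2 where p2: "tpart x y \<delta> n2 t2 t2" using tpart_exists[of x y \<delta>] xy dp by auto
  have pc: "tpart a y \<delta> (n1 + n2) (\<lambda>i. if i \<le> n1 then t1 i else t2 (i - n1)) (\<lambda>i. if i \<le> n1 then t1 i else t2 (i - n1))"
    by (rule tpart_concat[OF p1 p2])
  have s0: "t2 0 = t1 n1" using p1 p2 unfolding tpart_def by simp
  have "tpart a y d2 (n1 + n2) (\<lambda>i. if i \<le> n1 then t1 i else t2 (i - n1)) (\<lambda>i. if i \<le> n1 then t1 i else t2 (i - n1))"
    using tpart_delta[OF pc, of d2] by (simp add: \<delta>_def)
  then have "cmod (rsum g (\<lambda>i. if i \<le> n1 then t1 i else t2 (i - n1)) (\<lambda>i. if i \<le> n1 then t1 i else t2 (i - n1)) (n1 + n2) - Gy) < e / 2"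
    using d2(2) by blast
  then have "cmod (rsum g t1 t1 n1 + rsum g t2 t2 n2 - Gy) < e / 2"
    using rsum_concat[of t2 t1 n1 g t1 t2 n2, OF s0] by simp
  moreover have "cmod (rsum g t1 t1 n1 - Gx) < e / 2"
    using d1(2) tpart_delta[OF p1, of d1] by (simp add: \<delta>_def)
  moreover have "cmod (rsum g t2 t2 n2 - of_real (y - x) * c) \<le> (y - x) * \<eta>"
  proof -
    have m: "\<forall>i\<in>{1..n2}. t2 (i - 1) \<le> t2 i" using p2 unfolding tpart_def by (auto simp: less_imp_le)
    have b: "\<forall>i\<in>{1..n2}. cmod (g (t2 i) - c) \<le> \<eta>" using bd tpart_tag[OF p2] by auto
    have "t2 n2 = y" "t2 0 = x" using p2 unfolding tpart_def by auto
    then show ?thesis using rsum_bound[OF m b] by simp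
  qed
  moreover have eq: "Gy - Gx - of_real (y - x) * c
     = (rsum g t2 t2 n2 - of_real (y - x) * c) - (rsum g t1 t1 n1 + rsum g t2 t2 n2 - Gy) + (rsum g t1 t1 n1 - Gx)"
    by simp
  moreover have "cmod (Gy - Gx - of_real (y - x) * c) \<le> cmod (rsum g t2 t2 n2 - of_real (y - x) * c)
     + cmod (rsum g t1 t1 n1 + rsum g t2 t2 n2 - Gy) + cmod (rsum g t1 t1 n1 - Gx)"
    unfolding eq by (rule tri3)
  ultimately show "cmod (Gy - Gx - of_real (y - x) * c) \<le> (y - x) * \<eta> + e"
    by linarith
qed



theorem theorem5p6:
  fixes f F :: "real \<Rightarrow> interval" and a b :: real
  assumes "a < b"
    and "IR_integrable f a b"
    and "\<forall>t\<in>{a..b}. F t = IR_integral f a t"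
  shows "icont_on {a..b} F
    \<and> (\<forall>x\<in>{a..b}. icont_at_within f x {a..b} \<longrightarrow> ihas_deriv_within F (f x) x {a..b})"
proof -
  define g where "g s = vc (f s)" for s
  have gfun: "(\<lambda>s. vc (f s)) = g" by (rule ext) (simp add: g_def)
  obtain A0 where "IR_has_integral f a b A0" using assms(2) unfolding IR_integrable_def by blast
  then have A: "hasint g a b (vc A0)" unfolding g_def IR_hasint .
  have GF: "hasint g a t (vc (F t))" if t: "t \<in> {a..b}" for t
  proof -
    obtain L where L: "hasint g a t L" using sub_exists[OF A, of t] t by auto
    define A' where "A' = mk_interval (Re L) (exp (Im L))"
    have vA: "vc A' = L" unfolding A'_def by (rule vc_surj)
    have h: "IR_has_integral f a t A'" unfolding IR_hasint gfun using L vA by simp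
    have u: "B = A'" if "IR_has_integral f a t B" for B
    proof -
      have "hasint g a t (vc B)" using that unfolding IR_hasint g_def .
      then have "vc B = L" using hasint_unique[OF _ L] t by auto
      then show ?thesis using vA by (intro vc_inj) simp
    qed
    have "IR_integral f a t = A'" unfolding IR_integral_def using h u by (rule the_equality)
    then show ?thesis using assms(3) t L vA by simp
  qed
  obtain M0 where M0: "\<forall>s\<in>{a..b}. cmod (g s) \<le> M0" using bounded[OF A assms(1)] by blast
  define M where "M = max M0 0 + 1"
  have Mp: "M > 0" unfolding M_def by simp
  have Mb: "\<forall>s\<in>{a..b}. cmod (g s - 0) \<le> M" using M0 unfolding M_def by force
  have cont: "icont_on {a..b} F"
    unfolding icont_on_def icont_at_within_def
  proof (intro ballI allI impI)
    fix x e assume x: "x \<in> {a..b}" and e: "(0::real) < e"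
    have "\<forall>y\<in>{a..b}. \<bar>y - x\<bar> < e / M \<longrightarrow> idist (F y) (F x) < e"
    proof (intro ballI impI)
      fix y assume y: "y \<in> {a..b}" and yx: "\<bar>y - x\<bar> < e / M"
      have "\<bar>y - x\<bar> * M < e" using yx Mp by (simp add: pos_less_divide_eq)
      show "idist (F y) (F x) < e"
      proof (cases "x \<le> y")
        case True
        have "cmod (vc (F y) - vc (F x) - of_real (y - x) * 0) \<le> (y - x) * M"
          using incr[OF GF[OF x] GF[OF y], of 0 M] x y True Mb by auto
        then show ?thesis using \<open>\<bar>y - x\<bar> * M < e\<close> True by (simp add: idist_vc)
      next
        case False
        have "cmod (vc (F x) - vc (F y) - of_real (x - y) * 0) \<le> (x - y) * M"
          using incr[OF GF[OF y] GF[OF x], of 0 M] x y False Mb by auto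
        then show ?thesis using \<open>\<bar>y - x\<bar> * M < e\<close> False by (simp add: idist_vc norm_minus_commute)
      qed
    qed
    then show "\<exists>\<delta>>0. \<forall>y\<in>{a..b}. \<bar>y - x\<bar> < \<delta> \<longrightarrow> idist (F y) (F x) < e"
      using e Mp by (intro exI[of _ "e / M"]) auto
  qed
  have deriv: "ihas_deriv_within F (f x) x {a..b}" if x: "x \<in> {a..b}" and fc: "icont_at_within f x {a..b}" for x
    unfolding ihas_deriv_within_def
  proof (intro allI impI)
    fix e :: real assume e: "0 < e"
    obtain \<delta> where d: "\<delta> > 0" "\<forall>y\<in>{a..b}. \<bar>y - x\<bar> < \<delta> \<longrightarrow> idist (f y) (f x) < e / 2"
      using fc e unfolding icont_at_within_def by (meson half_gt_zero)
    have gd: "cmod (g y - g x) \<le> e / 2" if "y \<in> {a..b}" "\<bar>y - x\<bar> < \<delta>" for y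
      using d(2) that unfolding g_def idist_vc by force
    have "\<forall>h. h \<noteq> 0 \<and> \<bar>h\<bar> < \<delta> \<and> x + h \<in> {a..b} \<longrightarrow> idist (idiv (isub (F (x + h)) (F x)) h) (f x) < e"
    proof (intro allI impI)
      fix h assume h: "h \<noteq> 0 \<and> \<bar>h\<bar> < \<delta> \<and> x + h \<in> {a..b}"
      have key: "cmod (vc (F (x + h)) - vc (F x) - of_real h * g x) \<le> \<bar>h\<bar> * (e / 2)"
      proof (cases "h > 0")
        case True
        have "\<forall>s\<in>{x..x + h}. cmod (g s - g x) \<le> e / 2"
          using gd x h True by auto
        then have "cmod (vc (F (x + h)) - vc (F x) - of_real (x + h - x) * g x) \<le> (x + h - x) * (e / 2)"
          using incr[OF GF[OF x] GF, of "x + h" "g x" "e / 2"] x h True by auto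
        then show ?thesis using True by simp
      next
        case False
        then have hn: "h < 0" using h by auto
        have "\<forall>s\<in>{x + h..x}. cmod (g s - g x) \<le> e / 2"
          using gd x h hn by auto
        then have le: "cmod (vc (F x) - vc (F (x + h)) - of_real (x - (x + h)) * g x) \<le> (x - (x + h)) * (e / 2)"
          using incr[OF GF GF[OF x], of "x + h" "g x" "e / 2"] x h hn by auto
        have eq: "vc (F x) - vc (F (x + h)) - of_real (x - (x + h)) * g x
           = - (vc (F (x + h)) - vc (F x) - of_real h * g x)" by (simp add: algebra_simps)
        have "cmod (vc (F (x + h)) - vc (F x) - of_real h * g x) \<le> (x - (x + h)) * (e / 2)"
          using le unfolding eq norm_minus_cancel .
        then show ?thesis using hn by simp
      qed
      have "vc (idiv (isub (F (x + h)) (F x)) h) - vc (f x)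
          = (vc (F (x + h)) - vc (F x) - of_real h * g x) / of_real h"
        using h by (simp add: vc_idiv vc_isub g_def field_simps)
      then have "idist (idiv (isub (F (x + h)) (F x)) h) (f x)
          = cmod (vc (F (x + h)) - vc (F x) - of_real h * g x) / \<bar>h\<bar>"
        by (simp add: idist_vc norm_divide)
      also have "\<dots> \<le> e / 2" using key h by (simp add: divide_le_eq mult.commute)
      also have "\<dots> < e" using e by simp
      finally show "idist (idiv (isub (F (x + h)) (F x)) h) (f x) < e" .
    qed
    then show "\<exists>\<delta>>0. \<forall>h. h \<noteq> 0 \<and> \<bar>h\<bar> < \<delta> \<and> x + h \<in> {a..b} \<longrightarrow> idist (idiv (isub (F (x + h)) (F x)) h) (f x) < e"
      using d(1) by blast
  qed
  show ?thesis using cont deriv by blast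
qed

end
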